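(* For every integer $s\ge1$, let $N_s^\star=C(A-LC)^{s-1}L\in\mathbb R^{p\times p}$. Then $\|N_s^\star\|\le\kappa_F^2\psi\gamma_F^{s-1}$ and $\|N_s^\star\|_F\le\sqrt p\,\kappa_F^2\psi\gamma_F^{s-1}$. Moreover, for every integer $h\ge1$, $N^\star=[N_1^\star,\dots,N_h^\star]\in\mathbb R^{p\times ph}$ satisfies $\|N^\star\|_F\le\sqrt p\,\psi\frac{\kappa_F^2}{1-\gamma_F}$.
   Context: Standing setup. Consider the discrete-time LTI system $x_{t+1}=Ax_t+w_t$, $y_t=Cx_t+v_t$ ($t\ge0$) with $x_t\in\mathbb R^n$, $y_t\in\mathbb R^p$, $x_0=0$, $w_t\overset{iid}{\sim}\mathcal N(0,W)$, $v_t\overset{iid}{\sim}\mathcal N(0,V)$, the two noise sequences independent. Assume $(A,W^{1/2})$ is stabilizable and $(A,C)$ is detectable. Let $\Sigma\succeq0$ be the unique positive semidefinite solution of $\Sigma=A\Sigma A^\top-A\Sigma C^\top(C\Sigma C^\top+V)^{-1}C\Sigma A^\top+W$ and $L=A\Sigma C^\top(C\Sigma C^\top+V)^{-1}$. Known constants $\alpha_0,\alpha_1,\psi,\bar\sigma>0$ satisfy $\alpha_0I_n\preceq W\preceq\alpha_1I_n$, $\alpha_0I_p\preceq V\preceq\alpha_1I_p$, $\|C\|\le\psi$, $\|\Sigma\|\le\bar\sigma$. Set $\kappa_F=\sqrt{\bar\sigma/\alpha_0}$ and $\gamma_F=1-\frac{\alpha_0}{2\bar\sigma}$. $\|\cdot\|$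 is the Euclidean/spectral norm and $\|\cdot\|_F$ the Frobenius norm. *)

theory Defs
  imports "HOL-Analysis.Analysis"
begin

fun matpow :: "real^'n^'n \<Rightarrow> nat \<Rightarrow> real^'n^'n" where
  "matpow M 0 = mat 1"
| "matpow M (Suc k) = matpow M k ** M"

text \<open>Spectral (operator 2-)norm of a real matrix. (The library norm on
  real^'n^'m is the Frobenius norm.)\<close>
definition spec_norm :: "real^'n^'m \<Rightarrow> real" where
  "spec_norm M = onorm (\<lambda>x. M *v x)"

definition psd :: "real^'n^'n \<Rightarrow> bool" where
  "psd M \<longleftrightarrow> transpose M = M \<and> (\<forall>x. 0 \<le> x \<bullet> (M *v x))"

definition loewner_le :: "real^'n^'n \<Rightarrow> real^'n^'n \<Rightarrow> bool" where
  "loewner_le M N \<longleftrightarrow> psd (N - M)"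

definition psd_sqrt :: "real^'n^'n \<Rightarrow> real^'n^'n" where
  "psd_sqrt M = (THE S. psd S \<and> S ** S = M)"

definition cmat :: "real^'n^'m \<Rightarrow> complex^'n^'m" where
  "cmat M = (\<chi> i j. complex_of_real (M $ i $ j))"

definition schur_stable :: "real^'n^'n \<Rightarrow> bool" where
  "schur_stable M \<longleftrightarrow>
     (\<forall>(lam::complex) (v::complex^'n). v \<noteq> 0 \<and> cmat M *v v = lam *s v \<longrightarrow> cmod lam < 1)"

definition stabilizable :: "real^'n^'n \<Rightarrow> real^'m^'n \<Rightarrow> bool" where
  "stabilizable A B \<longleftrightarrow> (\<exists>K::real^'n^'m. schur_stable (A + B ** K))"

definition detectable :: "real^'n^'n \<Rightarrow> real^'n^'p \<Rightarrow> bool" where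
  "detectable A C \<longleftrightarrow> (\<exists>K::real^'p^'n. schur_stable (A - K ** C))"

end

theory Submission imports Defs begin

lemma dot_tr: "(x::real^'m) \<bullet> ((M::real^'n^'m) *v y) = (transpose M *v x) \<bullet> y"
  by (simp add: dot_lmul_matrix)

lemma bl_mv: "bounded_linear (\<lambda>x. (M::real^'n^'m) *v x)"
  by (simp add: linear_conv_bounded_linear)

lemma spec_app: "norm ((M::real^'n^'m) *v x) \<le> spec_norm M * norm x"
  unfolding spec_norm_def using onorm[OF bl_mv] by blast

lemma spec_nonneg: "0 \<le> spec_norm (M::real^'n^'m)"
  unfolding spec_norm_def using onorm_pos_le[OF bl_mv] by blast

lemma spec_le: assumes "\<And>x. norm ((M::real^'n^'m) *v x) \<le> b * norm x" shows "spec_norm M \<le> b"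
  unfolding spec_norm_def using onorm_le assms by blast

lemma spec_tr: "spec_norm (M::real^'n^'m) \<le> spec_norm (transpose M)"
proof (rule spec_le)
  fix x :: "real^'n"
  let ?s = "spec_norm (transpose M)"
  have "norm (M *v x)^2 = (M *v x) \<bullet> (M *v x)" by (simp add: power2_norm_eq_inner)
  also have "\<dots> = (transpose M *v (M *v x)) \<bullet> x" by (simp add: dot_tr)
  also have "\<dots> \<le> norm (transpose M *v (M *v x)) * norm x" by (rule norm_cauchy_schwarz)
  also have "\<dots> \<le> ?s * norm (M *v x) * norm x"
    using spec_app[of "transpose M" "M *v x"] by (intro mult_right_mono) auto
  finally have h: "norm (M *v x)^2 \<le> ?s * norm (M *v x) * norm x" .
  show "norm (M *v x) \<le> ?s * norm x"
  proof (cases "norm (M *v x) = 0")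
    case True then show ?thesis using spec_nonneg[of "transpose M"] by simp
  next
    case False
    then have "norm (M *v x) > 0" by simp
    with h show ?thesis by (simp add: power2_eq_square mult.assoc)
  qed
qed

lemma spec_tr_eq: "spec_norm (transpose (M::real^'n^'m)) = spec_norm M"
  using spec_tr[of M] spec_tr[of "transpose M"] by simp

lemma frob: "norm (M::real^'n^'m) \<le> sqrt (real CARD('m)) * spec_norm M"
proof -
  let ?s = "spec_norm M"
  have row: "norm (M$i) \<le> ?s" for i
  proof -
    have "norm (M$i)^2 = (M *v (M$i))$i"
      by (simp add: power2_norm_eq_inner inner_vec_def matrix_vector_mult_def)
    also have "\<dots> \<le> norm (M *v (M$i))" using component_le_norm_cart by (metis abs_le_D1 real_norm_def)
    also have "\<dots> \<le> ?s * norm (M$i)" by (rule spec_app)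
    finally have h: "norm (M$i)^2 \<le> ?s * norm (M$i)" .
    show ?thesis
    proof (cases "norm (M$i) = 0")
      case True then show ?thesis using spec_nonneg[of M] by simp
    next
      case False
      then have "norm (M$i) > 0" by simp
      with h show ?thesis by (simp add: power2_eq_square)
    qed
  qed
  have "norm M ^2 = (\<Sum>i\<in>UNIV. norm (M$i)^2)"
    by (simp add: power2_norm_eq_inner inner_vec_def)
  also have "\<dots> \<le> (\<Sum>i\<in>(UNIV::'m set). ?s^2)"
    by (rule sum_mono) (simp add: power_mono row)
  also have "\<dots> = (sqrt (real CARD('m)) * ?s)^2" by (simp add: power_mult_distrib)
  finally show ?thesis
    using spec_nonneg[of M] by (meson power2_le_imp_le mult_nonneg_nonneg real_sqrt_ge_zero of_nat_0_le_iff)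
qed

lemma l1: "(c *\<^sub>R mat 1 :: real^'n^'n) *v y = c *\<^sub>R y"
  by (metis matrix_vector_mul_lid scaleR_matrix_vector_assoc)
lemma l2: "((A::real^'n^'m) - B) ** (C::real^'k^'n) = A ** C - B ** C" 
  by (simp add: matrix_matrix_mult_def vec_eq_iff algebra_simps sum_subtractf)
lemma l3: "(C::real^'k^'n) ** ((A::real^'m^'k) - B)  = C ** A - C ** B"
  by (simp add: matrix_matrix_mult_def vec_eq_iff algebra_simps sum_subtractf)
lemma l4: "((A::real^'n^'m) + B) ** (C::real^'k^'n) = A ** C + B ** C" 
  by (simp add: matrix_matrix_mult_def vec_eq_iff algebra_simps sum.distrib)
lemma l5: "transpose ((A::real^'n^'m) - B) = transpose A - transpose B"
  by (simp add: transpose_def vec_eq_iff)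

lemma lyap:
  fixes A \<Sigma> W :: "real^'n^'n" and C :: "real^'n^'p" and V Si :: "real^'p^'p" and L :: "real^'p^'n"
  assumes SiS: "Si ** (C ** \<Sigma> ** transpose C + V) = mat 1"
    and DARE: "\<Sigma> = A ** \<Sigma> ** transpose A
                 - A ** \<Sigma> ** transpose C ** Si ** C ** \<Sigma> ** transpose A + W"
    and Ld: "L = A ** \<Sigma> ** transpose C ** Si"
  shows "\<Sigma> = (A - L ** C) ** \<Sigma> ** transpose (A - L ** C) + W + L ** V ** transpose L"
proof -
  have "L ** (C ** \<Sigma> ** transpose C + V) = A ** \<Sigma> ** transpose C"
    unfolding Ld by (metis SiS matrix_mul_assoc matrix_mul_rid)
  then have LS: "L ** C ** \<Sigma> ** transpose C + L ** V = A ** \<Sigma> ** transpose C"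
    by (simp add: matrix_add_ldistrib matrix_mul_assoc)
  have e1: "L ** V ** transpose L = A ** \<Sigma> ** transpose C ** transpose L - L ** C ** \<Sigma> ** transpose C ** transpose L"
    using arg_cong[OF LS, of "\<lambda>X. X ** transpose L"] by (simp add: l4 algebra_simps)
  have D2: "\<Sigma> = A ** \<Sigma> ** transpose A - L ** C ** \<Sigma> ** transpose A + W"
    using DARE unfolding Ld by (simp add: matrix_mul_assoc)
  have e2: "(A - L ** C) ** \<Sigma> ** transpose (A - L ** C) = A ** \<Sigma> ** transpose A - A ** \<Sigma> ** transpose C ** transpose L
     - L ** C ** \<Sigma> ** transpose A + L ** C ** \<Sigma> ** transpose C ** transpose L"
    by (simp add: l2 l3 l5 matrix_transpose_mul matrix_mul_assoc algebra_simps)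
  show ?thesis
    apply (simp only: e1 e2)
    apply (rule trans[OF D2])
    by (simp add: algebra_simps)
qed

declare transpose_matrix_vector[simp del]

theorem lemma2:
  fixes A :: "real^'n^'n" and C :: "real^'n^'p"
    and W \<Sigma> :: "real^'n^'n" and V :: "real^'p^'p" and L :: "real^'p^'n"
    and \<alpha>0 \<alpha>1 \<psi> \<sigma>bar :: real
  assumes W_psd: "psd W" and V_psd: "psd V"
    and stab: "stabilizable A (psd_sqrt W)"
    and detect: "detectable A C"
    and Sigma_psd: "psd \<Sigma>"
    and DARE: "\<Sigma> = A ** \<Sigma> ** transpose A
                 - A ** \<Sigma> ** transpose C ** matrix_inv (C ** \<Sigma> ** transpose C + V)
                     ** C ** \<Sigma> ** transpose A + W"
    and L_def: "L = A ** \<Sigma> ** transpose C ** matrix_inv (C ** \<Sigma> ** transpose C + V)"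
    and pos: "\<alpha>0 > 0" "\<alpha>1 > 0" "\<psi> > 0" "\<sigma>bar > 0"
    and W_lo: "loewner_le (\<alpha>0 *\<^sub>R mat 1) W" and W_hi: "loewner_le W (\<alpha>1 *\<^sub>R mat 1)"
    and V_lo: "loewner_le (\<alpha>0 *\<^sub>R mat 1) V" and V_hi: "loewner_le V (\<alpha>1 *\<^sub>R mat 1)"
    and C_bd: "spec_norm C \<le> \<psi>"
    and Sigma_bd: "spec_norm \<Sigma> \<le> \<sigma>bar"
  defines "\<kappa>F \<equiv> sqrt (\<sigma>bar / \<alpha>0)"
    and "\<gamma>F \<equiv> 1 - \<alpha>0 / (2 * \<sigma>bar)"
    and "Nstar \<equiv> (\<lambda>s::nat. C ** matpow (A - L ** C) (s - 1) ** L)"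
  shows "(\<forall>s::nat. s \<ge> 1 \<longrightarrow>
            spec_norm (Nstar s) \<le> \<kappa>F^2 * \<psi> * \<gamma>F^(s - 1)
          \<and> norm (Nstar s) \<le> sqrt (real CARD('p)) * \<kappa>F^2 * \<psi> * \<gamma>F^(s - 1))
       \<and> (\<forall>h::nat. h \<ge> 1 \<longrightarrow>
            sqrt (\<Sum>s=1..h. (norm (Nstar s))^2)
              \<le> sqrt (real CARD('p)) * \<psi> * \<kappa>F^2 / (1 - \<gamma>F))"
proof -
  define F where "F = A - L ** C"
  define S where "S = C ** \<Sigma> ** transpose C + V"
  define q where "q = (\<lambda>y::real^'n. y \<bullet> (\<Sigma> *v y))"
  define \<rho> where "\<rho> = 1 - \<alpha>0 / \<sigma>bar"
  have Wq: "\<alpha>0 * (y \<bullet> y) \<le> y \<bullet> (W *v y)" for y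
  proof -
    have "0 \<le> y \<bullet> ((W - \<alpha>0 *\<^sub>R mat 1) *v y)" using W_lo unfolding loewner_le_def psd_def by blast
    then show ?thesis by (simp add: matrix_vector_mult_diff_rdistrib l1 inner_diff_right)
  qed
  have Vq: "\<alpha>0 * (y \<bullet> y) \<le> y \<bullet> (V *v y)" for y
  proof -
    have "0 \<le> y \<bullet> ((V - \<alpha>0 *\<^sub>R mat 1) *v y)" using V_lo unfolding loewner_le_def psd_def by blast
    then show ?thesis by (simp add: matrix_vector_mult_diff_rdistrib l1 inner_diff_right)
  qed
  have q0: "0 \<le> q y" for y using Sigma_psd unfolding psd_def q_def by blast
  have qup: "q y \<le> \<sigma>bar * (y \<bullet> y)" for y
  proof -
    have "q y \<le> norm y * norm (\<Sigma> *v y)" unfolding q_def using norm_cauchy_schwarz by blast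
    also have "\<dots> \<le> norm y * (\<sigma>bar * norm y)"
      using spec_app[of \<Sigma> y] Sigma_bd spec_nonneg[of \<Sigma>]
      by (intro mult_left_mono) (auto, metis mult_right_mono norm_ge_zero order_trans)
    finally show ?thesis by (simp add: power2_norm_eq_inner[symmetric] power2_eq_square algebra_simps)
  qed
  have Sq: "\<alpha>0 * (x \<bullet> x) \<le> x \<bullet> (S *v x)" for x
  proof -
    have "x \<bullet> ((C ** \<Sigma> ** transpose C) *v x) = q (transpose C *v x)"
      unfolding q_def by (simp add: dot_tr matrix_vector_mul_assoc[symmetric])
    then show ?thesis using q0[of "transpose C *v x"] Vq[of x]
      unfolding S_def by (simp add: matrix_vector_mult_add_rdistrib inner_add_right)
  qed
  have "\<forall>x. S *v x = 0 \<longrightarrow> x = 0"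
  proof (intro allI impI)
    fix x assume "S *v x = 0"
    then have "\<alpha>0 * (x \<bullet> x) \<le> 0" using Sq[of x] by simp
    then have "x \<bullet> x \<le> 0" using pos(1) by (simp add: mult_le_0_iff)
    then show "x = 0" by (metis inner_eq_zero_iff order_antisym inner_ge_zero)
  qed
  then have "invertible S" using matrix_left_invertible_ker invertible_left_inverse by blast
  then have SiS: "matrix_inv S ** S = mat 1"
    unfolding invertible_def matrix_inv_def by (rule someI_ex[THEN conjunct2])
  have Ly: "\<Sigma> = F ** \<Sigma> ** transpose F + W + L ** V ** transpose L"
    unfolding F_def by (rule lyap[OF SiS[unfolded S_def] DARE L_def])
  have quad: "q y = q (transpose F *v y) + y \<bullet> (W *v y) + (transpose L *v y) \<bullet> (V *v (transpose L *v y))" for y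
  proof -
    have "q y = y \<bullet> ((F ** \<Sigma> ** transpose F + W + L ** V ** transpose L) *v y)"
      unfolding q_def using Ly by metis
    also have "\<dots> = q (transpose F *v y) + y \<bullet> (W *v y) + (transpose L *v y) \<bullet> (V *v (transpose L *v y))"
      unfolding q_def by (simp add: matrix_vector_mult_add_rdistrib inner_add_right dot_tr matrix_vector_mul_assoc[symmetric])
    finally show ?thesis .
  qed
  have contr0: "q (transpose F *v y) + \<alpha>0 * (y \<bullet> y) + \<alpha>0 * ((transpose L *v y) \<bullet> (transpose L *v y)) \<le> q y" for y
    using quad[of y] Wq[of y] Vq[of "transpose L *v y"] by simp
  have a_le: "\<alpha>0 \<le> \<sigma>bar"
  proof -
    obtain i :: 'n where True by blast
    let ?y = "axis i (1::real)"
    have e: "?y \<bullet> ?y = 1" by (simp add: inner_axis_axis)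
    have "0 \<le> \<alpha>0 * ((transpose L *v ?y) \<bullet> (transpose L *v ?y))" using pos(1) by simp
    then show ?thesis using contr0[of ?y] qup[of ?y] q0[of "transpose F *v ?y"]
      unfolding e mult_1_right by linarith
  qed
  have rho0: "0 \<le> \<rho>" "\<rho> \<le> 1" unfolding \<rho>_def using a_le pos by (auto simp: field_simps)
  have contr: "q (transpose F *v y) \<le> \<rho> * q y" for y
  proof -
    have "q y / \<sigma>bar \<le> y \<bullet> y" using qup[of y] pos(4) by (simp add: field_simps)
    then have "\<alpha>0 * (q y / \<sigma>bar) \<le> \<alpha>0 * (y \<bullet> y)" using pos(1) by (intro mult_left_mono) auto
    moreover have "0 \<le> \<alpha>0 * ((transpose L *v y) \<bullet> (transpose L *v y))" using pos(1) by simp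
    ultimately show ?thesis using contr0[of y] unfolding \<rho>_def by (simp add: algebra_simps)
  qed
  have iter: "q (transpose (matpow F k) *v y) \<le> \<rho>^k * q y" for k y
  proof (induction k)
    case 0 then show ?case by simp
  next
    case (Suc k)
    have "q (transpose (matpow F (Suc k)) *v y) = q (transpose F *v (transpose (matpow F k) *v y))"
      by (simp add: matrix_transpose_mul matrix_vector_mul_assoc)
    also have "\<dots> \<le> \<rho> * q (transpose (matpow F k) *v y)" by (rule contr)
    also have "\<dots> \<le> \<rho> * (\<rho>^k * q y)" using Suc rho0 by (intro mult_left_mono) auto
    finally show ?case by simp
  qed
  have Lb: "\<alpha>0 * (norm (transpose L *v z))^2 \<le> q z" for z
    using contr0[of z] q0[of "transpose F *v z"] pos(1)
    by (simp add: power2_norm_eq_inner) (smt (verit) inner_ge_zero mult_nonneg_nonneg)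
  have kap1: "1 \<le> \<kappa>F" unfolding \<kappa>F_def using a_le pos by simp
  have gam: "sqrt \<rho> \<le> \<gamma>F" "0 \<le> \<gamma>F" "\<gamma>F < 1"
  proof -
    have "\<gamma>F^2 = \<rho> + (\<alpha>0 / (2 * \<sigma>bar))^2" unfolding \<rho>_def \<gamma>F_def
      using pos(4) by (simp add: power2_eq_square field_simps)
    then have "\<rho> \<le> \<gamma>F^2" by simp
    moreover have "0 \<le> \<gamma>F" unfolding \<gamma>F_def using a_le pos by (simp add: field_simps)
    ultimately show "sqrt \<rho> \<le> \<gamma>F" "0 \<le> \<gamma>F" by (auto intro: real_le_lsqrt rho0)
    show "\<gamma>F < 1" unfolding \<gamma>F_def using pos by simp
  qed
  have spec: "spec_norm (Nstar s) \<le> \<kappa>F^2 * \<psi> * \<gamma>F^(s - 1)" for s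
  proof -
    let ?P = "matpow F (s - 1)"
    let ?B = "\<kappa>F * \<psi> * sqrt \<rho> ^ (s - 1)"
    have "spec_norm (transpose (Nstar s)) \<le> ?B"
    proof (rule spec_le)
      fix y :: "real^'p"
      have eq: "transpose (Nstar s) *v y = transpose L *v (transpose ?P *v (transpose C *v y))"
        unfolding Nstar_def F_def[symmetric] by (simp add: matrix_transpose_mul matrix_vector_mul_assoc)
      have cy: "norm (transpose C *v y) \<le> \<psi> * norm y"
        using spec_app[of "transpose C" y] spec_tr_eq[of C] C_bd
        by (metis mult_right_mono norm_ge_zero order_trans)
      have "\<alpha>0 * (norm (transpose (Nstar s) *v y))^2 \<le> q (transpose ?P *v (transpose C *v y))"
        unfolding eq by (rule Lb)
      also have "\<dots> \<le> \<rho>^(s-1) * q (transpose C *v y)" by (rule iter)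
      also have "\<dots> \<le> \<rho>^(s-1) * (\<sigma>bar * (norm (transpose C *v y))^2)"
        using qup rho0 by (intro mult_left_mono) (auto simp: power2_norm_eq_inner)
      also have "\<dots> \<le> \<rho>^(s-1) * (\<sigma>bar * (\<psi> * norm y)^2)"
        using cy rho0 pos by (intro mult_left_mono power_mono) auto
      finally have h: "(norm (transpose (Nstar s) *v y))^2 \<le> (\<rho>^(s-1) * (\<sigma>bar / \<alpha>0)) * (\<psi> * norm y)^2"
        using pos(1) by (simp add: field_simps)
      have k2: "\<kappa>F^2 = \<sigma>bar / \<alpha>0" unfolding \<kappa>F_def using pos by simp
      have r2: "(sqrt \<rho> ^ (s-1))^2 = \<rho>^(s-1)"
        using rho0 by (simp add: power_mult_distrib[symmetric] power_mult[symmetric] mult.commute power_mult real_sqrt_pow2)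
      have "(?B * norm y)^2 = \<kappa>F^2 * (sqrt \<rho> ^ (s-1))^2 * (\<psi> * norm y)^2"
        by (simp add: power_mult_distrib)
      also have "\<dots> = (\<rho>^(s-1) * (\<sigma>bar / \<alpha>0)) * (\<psi> * norm y)^2" unfolding k2 r2 by simp
      finally have hb: "(?B * norm y)^2 = (\<rho>^(s-1) * (\<sigma>bar / \<alpha>0)) * (\<psi> * norm y)^2" .
      have "0 \<le> ?B * norm y" using kap1 pos rho0 by simp
      with h hb show "norm (transpose (Nstar s) *v y) \<le> ?B * norm y"
        by (metis power2_le_imp_le)
    qed
    then have "spec_norm (Nstar s) \<le> ?B" using spec_tr_eq by metis
    also have "?B \<le> \<kappa>F^2 * \<psi> * \<gamma>F^(s - 1)"
    proof -
      have "\<kappa>F \<le> \<kappa>F^2" using kap1 by (simp add: power2_eq_square)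
      moreover have "sqrt \<rho> ^ (s-1) \<le> \<gamma>F ^ (s-1)" using gam rho0 by (intro power_mono) auto
      ultimately show ?thesis using kap1 pos(3) gam rho0
        by (intro mult_mono) auto
    qed
    finally show ?thesis .
  qed
  have frobs: "norm (Nstar s) \<le> sqrt (real CARD('p)) * \<kappa>F^2 * \<psi> * \<gamma>F^(s - 1)" for s
    using frob[of "Nstar s"] spec[of s]
    by (smt (verit) mult.assoc mult_left_mono real_sqrt_ge_zero of_nat_0_le_iff)
  show ?thesis
  proof (intro conjI allI impI)
    fix s :: nat
    show "spec_norm (Nstar s) \<le> \<kappa>F^2 * \<psi> * \<gamma>F^(s - 1)" by (rule spec)
    show "norm (Nstar s) \<le> sqrt (real CARD('p)) * \<kappa>F^2 * \<psi> * \<gamma>F^(s - 1)" by (rule frobs)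
  next
    fix h :: nat
    let ?c = "sqrt (real CARD('p)) * \<kappa>F^2 * \<psi>"
    have c0: "0 \<le> ?c" using pos by simp
    have "sqrt (\<Sum>s=1..h. (norm (Nstar s))^2) = L2_set (\<lambda>s. norm (Nstar s)) {1..h}"
      by (simp add: L2_set_def)
    also have "\<dots> \<le> (\<Sum>s=1..h. norm (Nstar s))" by (rule L2_set_le_sum) simp
    also have "\<dots> \<le> (\<Sum>s=1..h. ?c * \<gamma>F^(s-1))" by (rule sum_mono, rule frobs)
    also have "\<dots> = ?c * (\<Sum>k<h. \<gamma>F^k)"
    proof -
      have "(\<Sum>s=1..h. \<gamma>F^(s-1)) = (\<Sum>k<h. \<gamma>F^k)"
        by (induction h) (auto simp: atLeastAtMostSuc_conv)
      then show ?thesis by (simp add: sum_distrib_left[symmetric])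
    qed
    also have "\<dots> \<le> ?c * (1 / (1 - \<gamma>F))"
    proof -
      have "(\<Sum>k<h. \<gamma>F^k) = (1 - \<gamma>F^h) / (1 - \<gamma>F)" using gam by (simp add: sum_gp_strict)
      also have "\<dots> \<le> 1 / (1 - \<gamma>F)" using gam by (intro divide_right_mono) auto
      finally show ?thesis using c0 by (intro mult_left_mono)
    qed
    finally show "sqrt (\<Sum>s=1..h. (norm (Nstar s))^2) \<le> sqrt (real CARD('p)) * \<psi> * \<kappa>F^2 / (1 - \<gamma>F)"
      by (simp add: mult_ac)
  qed
qed
end
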